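(* Let $\mu>0$, $0<\tau^-<\tau^+$, let $k\ge0$ be an integer, and for $\gamma\in(0,\mu)$ let $\tau=\tau(\gamma)\in[\tau^-,\tau^+]$ and let $\omega_k=\omega_k(\gamma)$ satisfy $\omega_k\tau\in((2k+1)\pi,(2k+2)\pi)$. Let $$r_k(\gamma)=\frac{\omega_k^2+\gamma^2}{2\gamma(\gamma-\mu)}.$$ Then for $\gamma\in(0,\mu)$: (1) $|r_k(\gamma)|\ge 2(\omega_k/\mu)^2$; (2) $r_k(\gamma)\to-\infty$ as $\gamma\to0$ or $\gamma\to\mu$; (3) $|r_k(\gamma)|\le\dfrac{(2k+2)^2(\pi/\tau^-)^2+\gamma^2}{2\gamma(\mu-\gamma)}$.
   Context: In the paper, $\tau$ is the state-dependent delay $a/v(\xi)$ at a steady state $\xi$ for a decreasing velocity function $v$ with limiting values $v^->v^+>0$, so that $\tau\in(\tau^-,\tau^+)$ with $\tau^\pm=a/v^\pm$. *)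

theory Defs
  imports Complex_Main
begin

definition r_fun :: "real \<Rightarrow> real \<Rightarrow> real \<Rightarrow> real" where
  "r_fun \<mu> \<omega> \<gamma> = (\<omega>\<^sup>2 + \<gamma>\<^sup>2) / (2 * \<gamma> * (\<gamma> - \<mu>))"

end

theory Submission
  imports Defs "HOL-Real_Asymp.Real_Asymp"
begin

theorem proposition5p5:
  fixes \<mu> tau_minus tau_plus :: real and k :: nat
    and \<tau> \<omega> :: "real \<Rightarrow> real"
  assumes "\<mu> > 0" and "0 < tau_minus" and "tau_minus < tau_plus"
    and tau_range: "\<And>\<gamma>. 0 < \<gamma> \<Longrightarrow> \<gamma> < \<mu> \<Longrightarrow> tau_minus \<le> \<tau> \<gamma> \<and> \<tau> \<gamma> \<le> tau_plus"
    and omega_range: "\<And>\<gamma>. 0 < \<gamma> \<Longrightarrow> \<gamma> < \<mu> \<Longrightarrow>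
        (2 * real k + 1) * pi < \<omega> \<gamma> * \<tau> \<gamma> \<and> \<omega> \<gamma> * \<tau> \<gamma> < (2 * real k + 2) * pi"
  shows "(\<forall>\<gamma>. 0 < \<gamma> \<and> \<gamma> < \<mu> \<longrightarrow> \<bar>r_fun \<mu> (\<omega> \<gamma>) \<gamma>\<bar> \<ge> 2 * (\<omega> \<gamma> / \<mu>)\<^sup>2)
    \<and> filterlim (\<lambda>\<gamma>. r_fun \<mu> (\<omega> \<gamma>) \<gamma>) at_bot (at_right 0)
    \<and> filterlim (\<lambda>\<gamma>. r_fun \<mu> (\<omega> \<gamma>) \<gamma>) at_bot (at_left \<mu>)
    \<and> (\<forall>\<gamma>. 0 < \<gamma> \<and> \<gamma> < \<mu> \<longrightarrow> \<bar>r_fun \<mu> (\<omega> \<gamma>) \<gamma>\<bar> \<le>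
          ((2 * real k + 2)\<^sup>2 * (pi / tau_minus)\<^sup>2 + \<gamma>\<^sup>2) / (2 * \<gamma> * (\<mu> - \<gamma>)))"
proof -
  have absr: "\<bar>r_fun \<mu> (\<omega> g) g\<bar> = ((\<omega> g)\<^sup>2 + g\<^sup>2) / (2 * g * (\<mu> - g))" 
    and rneg: "r_fun \<mu> (\<omega> g) g = - (((\<omega> g)\<^sup>2 + g\<^sup>2) / (2 * g * (\<mu> - g)))"
    if "0 < g" "g < \<mu>" for g
  proof -
    have d: "2 * g * (g - \<mu>) = - (2 * g * (\<mu> - g))" by algebra
    have p: "2 * g * (\<mu> - g) > 0" using that by simp
    show "r_fun \<mu> (\<omega> g) g = - (((\<omega> g)\<^sup>2 + g\<^sup>2) / (2 * g * (\<mu> - g)))"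
      unfolding r_fun_def d by simp
    then show "\<bar>r_fun \<mu> (\<omega> g) g\<bar> = ((\<omega> g)\<^sup>2 + g\<^sup>2) / (2 * g * (\<mu> - g))"
    proof -
      have "0 \<le> ((\<omega> g)\<^sup>2 + g\<^sup>2) / (2 * g * (\<mu> - g))" using p by simp
      with \<open>r_fun \<mu> (\<omega> g) g = _\<close> show ?thesis by linarith
    qed
  qed
  define c where "c = (pi / tau_plus)\<^sup>2"
  have cpos: "c > 0" unfolding c_def using assms by simp
  have wlow: "c \<le> (\<omega> g)\<^sup>2" and wpos: "\<omega> g > 0"
    and wup: "\<omega> g < (2 * real k + 2) * pi / tau_minus" if "0 < g" "g < \<mu>" for g
  proof -
    from tau_range[OF that] omega_range[OF that]
    have t: "tau_minus \<le> \<tau> g" "\<tau> g \<le> tau_plus" and o: "(2 * real k + 1) * pi < \<omega> g * \<tau> g"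
      "\<omega> g * \<tau> g < (2 * real k + 2) * pi" by auto
    have tp: "\<tau> g > 0" using t assms by linarith
    have "pi \<le> (2 * real k + 1) * pi" by simp
    hence "pi < \<omega> g * \<tau> g" using o by linarith
    thus "\<omega> g > 0" using tp pi_gt_zero by (metis mult_nonpos_nonneg not_less less_imp_le less_le_trans)
    have "\<omega> g * \<tau> g \<le> \<omega> g * tau_plus" using t \<open>\<omega> g > 0\<close> by simp
    hence "pi \<le> \<omega> g * tau_plus" using \<open>pi < \<omega> g * \<tau> g\<close> by linarith
    hence "pi / tau_plus \<le> \<omega> g" using assms by (simp add: divide_simps)
    moreover have "0 \<le> pi / tau_plus" using assms by simp
    ultimately show "c \<le> (\<omega> g)\<^sup>2" unfolding c_def by (simp add: power_mono)
    have "\<omega> g * tau_minus \<le> \<omega> g * \<tau> g" using t \<open>\<omega> g > 0\<close> by simp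
    hence "\<omega> g * tau_minus < (2 * real k + 2) * pi" using o by linarith
    thus "\<omega> g < (2 * real k + 2) * pi / tau_minus" using assms by (simp add: divide_simps)
  qed
  have P1: "\<forall>\<gamma>. 0 < \<gamma> \<and> \<gamma> < \<mu> \<longrightarrow> \<bar>r_fun \<mu> (\<omega> \<gamma>) \<gamma>\<bar> \<ge> 2 * (\<omega> \<gamma> / \<mu>)\<^sup>2"
  proof (intro allI impI)
    fix g assume g: "0 < g \<and> g < \<mu>"
    have d: "0 < 2 * g * (\<mu> - g)" using g by simp
    have e: "\<mu>\<^sup>2 / 2 - 2 * g * (\<mu> - g) = (\<mu> - 2 * g)\<^sup>2 / 2"
      by (simp add: power2_eq_square field_simps)
    have d2: "2 * g * (\<mu> - g) \<le> \<mu>\<^sup>2 / 2" using e zero_le_power2[of "\<mu> - 2 * g"] by linarith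
    have "2 * (\<omega> g / \<mu>)\<^sup>2 = (\<omega> g)\<^sup>2 / (\<mu>\<^sup>2 / 2)" using assms by (simp add: power_divide)
    also have "\<dots> \<le> (\<omega> g)\<^sup>2 / (2 * g * (\<mu> - g))"
      by (rule divide_left_mono[OF d2]) (use d assms(1) in auto)
    also have "\<dots> \<le> ((\<omega> g)\<^sup>2 + g\<^sup>2) / (2 * g * (\<mu> - g))"
      by (rule divide_right_mono) (use d in auto)
    finally show "\<bar>r_fun \<mu> (\<omega> g) g\<bar> \<ge> 2 * (\<omega> g / \<mu>)\<^sup>2" using absr g by simp
  qed
  have bnd: "r_fun \<mu> (\<omega> g) g \<le> - c / (2 * g * (g * 0 + \<mu> - g))" if "0 < g" "g < \<mu>" for g
  proof -
    have d: "0 < 2 * g * (\<mu> - g)" using that by simp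
    have "c / (2 * g * (\<mu> - g)) \<le> ((\<omega> g)\<^sup>2 + g\<^sup>2) / (2 * g * (\<mu> - g))"
      by (rule divide_right_mono) (use d wlow[OF that] in \<open>auto intro: add_increasing2\<close>)
    thus ?thesis using rneg[OF that] by simp
  qed
  have L1: "filterlim (\<lambda>g. - c / (2 * g * (g * 0 + \<mu> - g))) at_bot (at_right 0)"
    using cpos assms(1) by real_asymp
  have L2: "filterlim (\<lambda>g. - c / (2 * g * (g * 0 + \<mu> - g))) at_bot (at_left \<mu>)"
    using cpos assms(1) by real_asymp
  have E1: "eventually (\<lambda>g. 0 < g \<and> g < \<mu>) (at_right 0)"
    using eventually_at_right_real[OF assms(1)] by (simp add: eventually_at_right_field)
  have E2: "eventually (\<lambda>g. 0 < g \<and> g < \<mu>) (at_left \<mu>)"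
    using eventually_at_left_real[OF assms(1)] by simp
  have P2: "filterlim (\<lambda>\<gamma>. r_fun \<mu> (\<omega> \<gamma>) \<gamma>) at_bot (at_right 0)"
    by (rule filterlim_at_bot_mono[OF L1]) (use E1 in \<open>eventually_elim, use bnd in blast\<close>)
  have P3: "filterlim (\<lambda>\<gamma>. r_fun \<mu> (\<omega> \<gamma>) \<gamma>) at_bot (at_left \<mu>)"
    by (rule filterlim_at_bot_mono[OF L2]) (use E2 in \<open>eventually_elim, use bnd in blast\<close>)
  have P4: "\<forall>\<gamma>. 0 < \<gamma> \<and> \<gamma> < \<mu> \<longrightarrow> \<bar>r_fun \<mu> (\<omega> \<gamma>) \<gamma>\<bar> \<le>
          ((2 * real k + 2)\<^sup>2 * (pi / tau_minus)\<^sup>2 + \<gamma>\<^sup>2) / (2 * \<gamma> * (\<mu> - \<gamma>))"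
  proof (intro allI impI)
    fix g assume g: "0 < g \<and> g < \<mu>"
    have d: "0 < 2 * g * (\<mu> - g)" using g by simp
    have "(\<omega> g)\<^sup>2 \<le> ((2 * real k + 2) * pi / tau_minus)\<^sup>2"
      using wup[of g] wpos[of g] g by (intro power_mono) auto
    also have "\<dots> = (2 * real k + 2)\<^sup>2 * (pi / tau_minus)\<^sup>2" by (simp add: power_mult_distrib power_divide)
    finally have "(\<omega> g)\<^sup>2 + g\<^sup>2 \<le> (2 * real k + 2)\<^sup>2 * (pi / tau_minus)\<^sup>2 + g\<^sup>2" by simp
    hence "((\<omega> g)\<^sup>2 + g\<^sup>2) / (2 * g * (\<mu> - g)) \<le> ((2 * real k + 2)\<^sup>2 * (pi / tau_minus)\<^sup>2 + g\<^sup>2) / (2 * g * (\<mu> - g))"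
      by (rule divide_right_mono) (use d in auto)
    thus "\<bar>r_fun \<mu> (\<omega> g) g\<bar> \<le> ((2 * real k + 2)\<^sup>2 * (pi / tau_minus)\<^sup>2 + g\<^sup>2) / (2 * g * (\<mu> - g))"
      using absr g by simp
  qed
  show ?thesis using P1 P2 P3 P4 by blast
qed

end
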